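(* Fix $q\ge2$. Let $\Delta_n=\log_q n-\lceil\log_q n\rceil$ and $$F(\Delta)=\max_{z\in\{-2,-1,0\}}\Big\{\Delta-z-(\log_q e)(q-1)q^{\Delta-z-1}\Big\}.$$ Then $$\lim_{n\to\infty}\frac{\mathcal C_1(n,q)}{\frac{q^n}{n}\big(\frac{q-1}{q}\big)^2q^{F(\Delta_n)}}=1,$$ and for every $\Delta\in(-1,0]$, $\big(\frac{q-1}{q}\big)^2q^{F(\Delta)}\le\frac{q-1}{eq}$. Moreover, the latter inequality is tight: along any subsequence of $n\to\infty$ with $\Delta_n=-\log_q(q-1)$ (or $\Delta_n\to-\log_q(q-1)$), $\mathcal C_1(n,q)\cdot\frac{n}{q^n}\to\frac{q-1}{eq}$.
   Context: $\Sigma_q=\{0,\dots,q-1\}$. For integers $1\le k<n$, $\mathcal C_1(n,q,k)$ is the set of $\vec a\in\Sigma_q^n$ with $a_1=\dots=a_k=0$, $a_{k+1}\ne0$, $a_n\ne0$, and $(a_{k+2},\dots,a_{n-1})$ containing no run of $k$ consecutive zeros. $\mathcal C_1(n,q)=\max_{1\le k<n}|\mathcal C_1(n,q,k)|$. *)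

theory Defs
  imports "HOL-Analysis.Analysis"
begin

text \<open>Words of length n over the alphabet {0,...,q-1} are lists; position i (1-based)
 in the paper corresponds to list index i-1.\<close>

definition has_zero_run :: "nat \<Rightarrow> nat list \<Rightarrow> bool" where
  "has_zero_run k ys \<longleftrightarrow> (\<exists>i. i + k \<le> length ys \<and> (\<forall>j. i \<le> j \<and> j < i + k \<longrightarrow> ys ! j = 0))"

definition C1k :: "nat \<Rightarrow> nat \<Rightarrow> nat \<Rightarrow> nat list set" where
  "C1k n q k = {a. length a = n \<and> set a \<subseteq> {0..<q}
      \<and> (\<forall>i<k. a ! i = 0)
      \<and> a ! k \<noteq> 0
      \<and> a ! (n - 1) \<noteq> 0
      \<and> \<not> has_zero_run k (take (n - 1 - (k + 1)) (drop (k + 1) a))}"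

definition C1 :: "nat \<Rightarrow> nat \<Rightarrow> nat" where
  "C1 n q = Max ((\<lambda>k. card (C1k n q k)) ` {1..<n})"

definition Delta :: "nat \<Rightarrow> nat \<Rightarrow> real" where
  "Delta q n = log (real q) (real n) - real_of_int \<lceil>log (real q) (real n)\<rceil>"

definition Fq :: "nat \<Rightarrow> real \<Rightarrow> real" where
  "Fq q d = Max ((\<lambda>z::int. d - real_of_int z
      - log (real q) (exp 1) * (real q - 1) * real q powr (d - real_of_int z - 1)) ` {-2, -1, 0})"

end

theory Submission
  imports Defs
begin


lemma hzr_app1: "has_zero_run k xs \<Longrightarrow> has_zero_run k (xs @ ys)"
  unfolding has_zero_run_def by (force simp: nth_append)

lemma hzr_app2: "has_zero_run k ys \<Longrightarrow> has_zero_run k (xs @ ys)"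
  unfolding has_zero_run_def
proof (elim exE conjE)
  fix i assume h: "i + k \<le> length ys" "\<forall>j. i \<le> j \<and> j < i + k \<longrightarrow> ys ! j = 0"
  show "\<exists>i. i + k \<le> length (xs @ ys) \<and> (\<forall>j. i \<le> j \<and> j < i + k \<longrightarrow> (xs @ ys) ! j = 0)"
    apply (rule exI[of _ "i + length xs"])
  proof (intro conjI allI impI)
    show "i + length xs + k \<le> length (xs @ ys)" using h by simp
    fix j assume j: "i + length xs \<le> j \<and> j < i + length xs + k"
    have "i \<le> j - length xs" "j - length xs < i + k" using j by linarith+
    then have "ys ! (j - length xs) = 0" using h(2) by blast
    then show "(xs @ ys) ! j = 0" using j by (simp add: nth_append)
  qed
qed

lemma hzr_short: "length xs < k \<Longrightarrow> \<not> has_zero_run k xs"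
  unfolding has_zero_run_def by auto

lemma hzr_rep: "has_zero_run k (xs @ replicate k 0)"
  unfolding has_zero_run_def
  by (rule exI[of _ "length xs"]) (auto simp: nth_append)

lemma hzr_take: "has_zero_run k (take j xs) \<Longrightarrow> has_zero_run k xs"
  by (metis append_take_drop_id hzr_app1)

lemma hzr_split:
  assumes "y \<noteq> 0" "has_zero_run k (xs @ y # ys)" "k \<ge> 1"
  shows "has_zero_run k xs \<or> has_zero_run k ys"
proof -
  from assms(2) obtain i where i: "i + k \<le> length (xs @ y # ys)"
    "\<forall>j. i \<le> j \<and> j < i + k \<longrightarrow> (xs @ y # ys) ! j = 0"
    unfolding has_zero_run_def by blast
  consider "i + k \<le> length xs" | "i > length xs" | "i \<le> length xs" "length xs < i + k" by linarith
  then show ?thesis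
  proof cases
    case 1
    then have "has_zero_run k xs" unfolding has_zero_run_def
      using i(2) by (intro exI[of _ i]) (auto simp: nth_append)
    then show ?thesis by blast
  next
    case 2
    have "has_zero_run k ys" unfolding has_zero_run_def
    proof (intro exI[of _ "i - length xs - 1"] conjI allI impI)
      show "i - length xs - 1 + k \<le> length ys" using i(1) 2 by auto
      fix j assume "i - length xs - 1 \<le> j \<and> j < i - length xs - 1 + k"
      then have "(xs @ y # ys) ! (j + length xs + 1) = 0" using i(2) 2 by (intro i(2)[rule_format]) auto
      then show "ys ! j = 0" by (simp add: nth_append)
    qed
    then show ?thesis by blast
  next
    case 3
    then have "(xs @ y # ys) ! length xs = 0" using i(2) by auto
    then show ?thesis using assms(1) by simp
  qed
qed

lemma hzr_exact: "length w = k \<Longrightarrow> has_zero_run k w \<longleftrightarrow> w = replicate k 0"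
proof
  assume "length w = k" "has_zero_run k w"
  then show "w = replicate k 0" unfolding has_zero_run_def
    by (auto intro!: nth_equalityI)
next
  assume "w = replicate k 0" then show "has_zero_run k w" using hzr_rep[where xs="[]" and k=k] by (simp del: replicate_eq_replicate)
qed

definition W :: "nat \<Rightarrow> nat \<Rightarrow> nat \<Rightarrow> nat list set" where
  "W q k m = {w. length w = m \<and> set w \<subseteq> {0..<q} \<and> \<not> has_zero_run k w}"

definition A :: "nat \<Rightarrow> nat \<Rightarrow> nat \<Rightarrow> nat" where
  "A q k m = card (W q k m)"

lemma W_finite: "finite (W q k m)"
proof -
  have "W q k m \<subseteq> {w. set w \<subseteq> {0..<q} \<and> length w = m}" unfolding W_def by auto
  then show ?thesis using finite_lists_length_eq[of "{0..<q}" m] finite_subset by blast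
qed

lemma A_small: "m < k \<Longrightarrow> A q k m = q ^ m"
proof -
  assume "m < k"
  then have "W q k m = {w. set w \<subseteq> {0..<q} \<and> length w = m}" unfolding W_def using hzr_short by auto
  then show ?thesis unfolding A_def using card_lists_length_eq[of "{0..<q}" m] by simp
qed

lemma A_k: "q \<ge> 1 \<Longrightarrow> A q k k = q ^ k - 1"
proof -
  assume q: "q \<ge> 1"
  have "W q k k = {w. set w \<subseteq> {0..<q} \<and> length w = k} - {replicate k 0}"
    unfolding W_def using hzr_exact by auto
  moreover have "replicate k 0 \<in> {w. set w \<subseteq> {0..<q} \<and> length w = k}" using q by auto
  ultimately show ?thesis unfolding A_def
    using card_lists_length_eq[of "{0..<q}" k] finite_lists_length_eq[of "{0..<q}" k]
    by (simp add: card_Diff_singleton)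
qed

lemma A_rec:
  assumes k: "k \<ge> 1"
  shows "A q k (m + k + 1) + (q - 1) * A q k m = q * A q k (m + k)"
proof -
  define Ext where "Ext = (\<lambda>(w, x). w @ [x]) ` (W q k (m + k) \<times> {0..<q})"
  define Bad where "Bad = (\<lambda>(v, y). v @ y # replicate k 0) ` (W q k m \<times> {1..<q})"
  have injE: "inj_on (\<lambda>(w, x). w @ [x]) (W q k (m + k) \<times> {0..<q})"
    by (auto simp: inj_on_def)
  have injB: "inj_on (\<lambda>(v, y). v @ y # replicate k 0) (W q k m \<times> {1..<q})"
    by (auto simp: inj_on_def W_def append_eq_append_conv)
  have cE: "card Ext = A q k (m + k) * q"
    unfolding Ext_def A_def using card_image[OF injE] by (simp add: card_cartesian_product)
  have cB: "card Bad = A q k m * (q - 1)"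
    unfolding Bad_def A_def using card_image[OF injB] by (simp add: card_cartesian_product)
  have fE: "finite Ext" unfolding Ext_def using W_finite by auto
  have fW: "finite (W q k (m + k + 1))" by (rule W_finite)
  have disj: "W q k (m + k + 1) \<inter> Bad = {}"
  proof (rule ccontr)
    assume "W q k (m + k + 1) \<inter> Bad \<noteq> {}"
    then obtain v y where "v @ y # replicate k 0 \<in> W q k (m + k + 1)"
      unfolding Bad_def by auto
    moreover have "has_zero_run k ((v @ [y]) @ replicate k 0)" by (rule hzr_rep)
    ultimately show False unfolding W_def by simp
  qed
  have sub1: "W q k (m + k + 1) \<subseteq> Ext"
  proof
    fix a assume a: "a \<in> W q k (m + k + 1)"
    then have ne: "a \<noteq> []" unfolding W_def by auto
    have a_eq: "a = butlast a @ [last a]" using ne by simp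
    have "\<not> has_zero_run k (butlast a)"
    proof
      assume "has_zero_run k (butlast a)"
      then have "has_zero_run k (butlast a @ [last a])" by (rule hzr_app1)
      then show False using a unfolding W_def a_eq[symmetric] by simp
    qed
    moreover have "set (butlast a) \<subseteq> {0..<q}" using a unfolding W_def
      by (auto dest: in_set_butlastD)
    moreover have "last a \<in> {0..<q}" using a last_in_set[OF ne] unfolding W_def by blast
    moreover have "length (butlast a) = m + k" using a unfolding W_def by simp
    ultimately have "(butlast a, last a) \<in> W q k (m + k) \<times> {0..<q}"
      unfolding W_def mem_Sigma_iff mem_Collect_eq by blast
    then show "a \<in> Ext" unfolding Ext_def
      by (rule image_eqI[rotated]) (simp add: a_eq[symmetric])
  qed
  have sub2: "Bad \<subseteq> Ext"
  proof
    fix a assume "a \<in> Bad"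
    then obtain v y where v: "v \<in> W q k m" and y: "y \<in> {1..<q}" and a: "a = v @ y # replicate k 0"
      unfolding Bad_def by auto
    define w where "w = v @ y # replicate (k - 1) 0"
    obtain k' where kk: "k = Suc k'" using k by (cases k) auto
    have "a = w @ [0]" unfolding a w_def kk by (simp add: replicate_append_same)
    moreover have "\<not> has_zero_run k w"
    proof
      assume "has_zero_run k w"
      then have "has_zero_run k v \<or> has_zero_run k (replicate (k - 1) 0)"
        unfolding w_def using hzr_split[of y k v] y k by auto
      then show False using v hzr_short[of "replicate (k - 1) (0::nat)" k] k unfolding W_def by auto
    qed
    moreover have "length w = m + k" using v k unfolding w_def W_def by auto
    moreover have "set w \<subseteq> {0..<q}" using v y unfolding w_def W_def by auto
    moreover have "(0::nat) < q" using y by auto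
    ultimately have "(w, 0) \<in> W q k (m + k) \<times> {0..<q}"
      unfolding W_def mem_Sigma_iff mem_Collect_eq by simp
    then show "a \<in> Ext" unfolding Ext_def
      by (rule image_eqI[rotated]) (simp add: \<open>a = w @ [0]\<close>)
  qed
  have sub3: "Ext \<subseteq> W q k (m + k + 1) \<union> Bad"
  proof
    fix a assume "a \<in> Ext"
    then obtain w x where w: "w \<in> W q k (m + k)" and x: "x < q" and a: "a = w @ [x]"
      unfolding Ext_def by auto
    show "a \<in> W q k (m + k + 1) \<union> Bad"
    proof (cases "has_zero_run k a")
      case False
      then show ?thesis using w x a unfolding W_def by auto
    next
      case True
      then obtain i where i: "i + k \<le> length a" "\<forall>j. i \<le> j \<and> j < i + k \<longrightarrow> a ! j = 0"
        unfolding has_zero_run_def by blast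
      have la: "length a = m + k + 1" using w a unfolding W_def by auto
      have ii: "i = m + 1"
      proof (rule ccontr)
        assume "i \<noteq> m + 1"
        then have "i + k \<le> length w" using i(1) la a by auto
        then have "has_zero_run k w" unfolding has_zero_run_def
          using i(2) a by (intro exI[of _ i]) (auto simp: nth_append)
        then show False using w unfolding W_def by auto
      qed
      define v where "v = take m w"
      define y where "y = w ! m"
      have lw: "length w = m + k" using w unfolding W_def by auto
      have tail: "drop (m + 1) a = replicate k 0"
        by (rule nth_equalityI) (use i ii la in auto)
      have head: "take (m + 1) a = v @ [y]"
        unfolding v_def y_def a using lw k by (simp add: take_Suc_conv_app_nth)
      have a2: "a = v @ y # replicate k 0"
        using head tail append_take_drop_id[of "m+1" a] by simp
      have y0: "y \<noteq> 0"
      proof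
        assume y0: "y = 0"
        have "has_zero_run k w" unfolding has_zero_run_def
        proof (intro exI[of _ m] conjI allI impI)
          show "m + k \<le> length w" using lw by simp
          fix j assume j: "m \<le> j \<and> j < m + k"
          show "w ! j = 0"
          proof (cases "j = m")
            case True then show ?thesis using y0 y_def by simp
          next
            case False
            then have "a ! j = 0" using i(2) ii j by auto
            then show ?thesis using a j lw by (simp add: nth_append)
          qed
        qed
        then show False using w unfolding W_def by auto
      qed
      have "v \<in> W q k m"
        using w lw hzr_take[of k m w] unfolding v_def W_def
        by (auto dest: in_set_takeD)
      moreover have "y \<in> {1..<q}"
      proof -
        have "w ! m \<in> set w" using lw k by (intro nth_mem) simp
        then show ?thesis using y0 w unfolding y_def W_def by auto
      qed
      ultimately show ?thesis unfolding Bad_def using a2 by auto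
    qed
  qed
  have "W q k (m + k + 1) \<union> Bad = Ext" using sub1 sub2 sub3 by blast
  then have "card (W q k (m + k + 1)) + card Bad = card Ext"
  proof -
    have "finite Bad" using fE sub2 by (rule rev_finite_subset)
    then show ?thesis using card_Un_disjoint[OF fW _ disj] \<open>W q k (m + k + 1) \<union> Bad = Ext\<close> by simp
  qed
  then show ?thesis using cE cB unfolding A_def by (simp add: mult.commute)
qed

lemma C1k_eq:
  assumes k: "1 \<le> k" and n: "n = k + m + 2"
  shows "C1k n q k = (\<lambda>(b, w, c). replicate k 0 @ b # w @ [c]) ` ({1..<q} \<times> W q k m \<times> {1..<q})"
proof
  show "(\<lambda>(b, w, c). replicate k 0 @ b # w @ [c]) ` ({1..<q} \<times> W q k m \<times> {1..<q}) \<subseteq> C1k n q k"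
  proof clarify
    fix b w c assume b: "b \<in> {1..<q}" and w: "w \<in> W q k m" and c: "c \<in> {1..<q}"
    let ?a = "replicate k 0 @ b # w @ [c]"
    have lw: "length w = m" using w unfolding W_def by simp
    have "drop (k + 1) ?a = w @ [c]" by simp
    then have tk: "take (n - 1 - (k + 1)) (drop (k + 1) ?a) = w" using lw n by simp
    have "?a ! (n - 1) = c" using lw n by (simp add: nth_append)
    moreover have "?a ! k = b" by (simp add: nth_append)
    moreover have "\<forall>i<k. ?a ! i = 0" by (simp add: nth_append)
    moreover have "length ?a = n" using lw n by simp
    moreover have "set ?a \<subseteq> {0..<q}" using b c w unfolding W_def by auto
    ultimately show "?a \<in> C1k n q k" unfolding C1k_def using tk b c w unfolding W_def by auto
  qed
next
  show "C1k n q k \<subseteq> (\<lambda>(b, w, c). replicate k 0 @ b # w @ [c]) ` ({1..<q} \<times> W q k m \<times> {1..<q})"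
  proof
    fix a assume a: "a \<in> C1k n q k"
    define w where "w = take (n - 1 - (k + 1)) (drop (k + 1) a)"
    have la: "length a = n" and sa: "set a \<subseteq> {0..<q}" and z: "\<forall>i<k. a ! i = 0"
      and b0: "a ! k \<noteq> 0" and c0: "a ! (n - 1) \<noteq> 0" and nz: "\<not> has_zero_run k w"
      using a unfolding C1k_def w_def by auto
    have t1: "take k a = replicate k 0"
      by (rule nth_equalityI) (use la n z in auto)
    have d1: "drop k a = a ! k # drop (k + 1) a"
      using la n by (simp add: Cons_nth_drop_Suc)
    have d2: "drop (k + 1) a = w @ [a ! (n - 1)]"
    proof -
      have "n - 1 - (k + 1) = m" using n by simp
      then have "drop (k + 1) a = w @ drop m (drop (k + 1) a)"
        by (simp only: w_def append_take_drop_id)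
      moreover have "drop m (drop (k + 1) a) = [a ! (n - 1)]"
      proof -
        have "drop m (drop (k + 1) a) = drop (n - 1) a" using n by (simp add: add.commute add.left_commute)
        also have "\<dots> = [a ! (n - 1)]" using la n
          by (metis Cons_nth_drop_Suc Suc_diff_1 diff_less drop_all le_refl zero_less_Suc add_2_eq_Suc' zero_less_one)
        finally show ?thesis .
      qed
      ultimately show ?thesis by metis
    qed
    have aeq: "a = replicate k 0 @ a ! k # w @ [a ! (n - 1)]"
      using append_take_drop_id[of k a] t1 d1 d2 by simp
    have lw: "length w = m" unfolding w_def using la n by simp
    have sw: "set w \<subseteq> {0..<q}" unfolding w_def using sa
      by (meson in_set_dropD in_set_takeD subset_iff)
    have "a ! k \<in> set a" "a ! (n - 1) \<in> set a" using la n by auto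
    then have "a ! k \<in> {1..<q}" "a ! (n - 1) \<in> {1..<q}" using sa b0 c0 by auto
    moreover have "w \<in> W q k m" unfolding W_def using lw sw nz by simp
    ultimately show "a \<in> (\<lambda>(b, w, c). replicate k 0 @ b # w @ [c]) ` ({1..<q} \<times> W q k m \<times> {1..<q})"
      using aeq by (intro image_eqI[where x="(a ! k, w, a ! (n - 1))"]) auto
  qed
qed

lemma card_C1k:
  assumes k: "1 \<le> k" and n: "n = k + m + 2"
  shows "card (C1k n q k) = (q - 1)^2 * A q k m"
proof -
  have inj: "inj_on (\<lambda>(b, w, c). replicate k (0::nat) @ b # w @ [c]) ({1..<q} \<times> W q k m \<times> {1..<q})"
    by (auto simp: inj_on_def W_def)
  show ?thesis unfolding C1k_eq[OF k n] card_image[OF inj]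
    by (simp add: card_cartesian_product A_def power2_eq_square)
qed

lemma card_C1k_last:
  assumes n: "n \<ge> 2"
  shows "card (C1k n q (n - 1)) \<le> q - 1"
proof -
  have "C1k n q (n - 1) \<subseteq> (\<lambda>c. replicate (n - 1) 0 @ [c]) ` {1..<q}"
  proof
    fix a assume a: "a \<in> C1k n q (n - 1)"
    then have la: "length a = n" and z: "\<forall>i<n - 1. a ! i = 0" and c: "a ! (n - 1) \<noteq> 0"
      and sa: "set a \<subseteq> {0..<q}"
      unfolding C1k_def by auto
    have "a = replicate (n - 1) 0 @ [a ! (n - 1)]"
    proof (rule nth_equalityI)
      show "length a = length (replicate (n - 1) 0 @ [a ! (n - 1)])" using la n by simp
      fix i assume i: "i < length a"
      show "a ! i = (replicate (n - 1) 0 @ [a ! (n - 1)]) ! i"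
      proof (cases "i < n - 1")
        case True then show ?thesis using z by (simp add: nth_append)
      next
        case False then have "i = n - 1" using i la by simp
        then show ?thesis by (simp add: nth_append)
      qed
    qed
    moreover have "a ! (n - 1) \<in> set a" using la n by auto
    ultimately show "a \<in> (\<lambda>c. replicate (n - 1) 0 @ [c]) ` {1..<q}"
      using c sa by (intro image_eqI[where x="a ! (n - 1)"]) auto
  qed
  then have "card (C1k n q (n - 1)) \<le> card ((\<lambda>c. replicate (n - 1) (0::nat) @ [c]) ` {1..<q})"
    by (intro card_mono) auto
  also have "\<dots> \<le> q - 1" using card_image_le[of "{1..<q}" "(\<lambda>c. replicate (n - 1) (0::nat) @ [c])"] by simp
  finally show ?thesis .
qed



definition ff :: "nat \<Rightarrow> nat \<Rightarrow> nat \<Rightarrow> real" where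
  "ff q k m = real (A q k m) / real q ^ m"

definition dl :: "nat \<Rightarrow> nat \<Rightarrow> real" where
  "dl q k = (real q - 1) / real q ^ (k + 1)"

definition xx :: "nat \<Rightarrow> nat \<Rightarrow> real" where
  "xx q k = dl q k / (1 - 2 * real k * dl q k)"

context
  fixes q k :: nat
  assumes q2: "2 \<le> q" and k1: "1 \<le> k"
begin

lemma ff_small: "m < k \<Longrightarrow> ff q k m = 1"
  unfolding ff_def using A_small[of m k q] q2 by simp

lemma ff_k: "ff q k k = 1 - 1 / real q ^ k"
proof -
  have "real (A q k k) = real q ^ k - 1" using A_k[of q k] q2
    by (simp add: of_nat_diff)
  then show ?thesis unfolding ff_def using q2 by (simp add: field_simps)
qed

lemma dl_pos: "0 < dl q k" unfolding dl_def using q2 by simp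

lemma ff_rec: "ff q k (m + k + 1) = ff q k (m + k) - dl q k * ff q k m"
proof -
  have e: "real (A q k (m + k + 1)) = real q * real (A q k (m + k)) - (real q - 1) * real (A q k m)"
    using arg_cong[OF A_rec[OF k1, of q m], of real] q2 by (simp add: of_nat_diff)
  have qp: "real q ^ (m + k + 1) = real q * real q ^ (m + k)" "real q ^ (m + k + 1) = real q ^ m * real q ^ (k + 1)"
    by (simp_all add: power_add)
  have "ff q k (m + k + 1) = (real q * real (A q k (m + k)) - (real q - 1) * real (A q k m)) / real q ^ (m + k + 1)"
    unfolding ff_def e ..
  also have "\<dots> = real (A q k (m + k)) / real q ^ (m + k) - (real q - 1) / real q ^ (k + 1) * (real (A q k m) / real q ^ m)"
    using q2 by (simp add: field_simps power_add)
  finally show ?thesis unfolding ff_def dl_def .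
qed

lemma ff_nonneg: "0 \<le> ff q k m" unfolding ff_def by simp

lemma ff_Suc_le: "ff q k (Suc m) \<le> ff q k m"
proof (cases "Suc m < k")
  case True then show ?thesis using ff_small by simp
next
  case False
  show ?thesis
  proof (cases "Suc m = k")
    case True
    then show ?thesis using ff_k ff_small[of m] by simp
  next
    case False
    then obtain j where j: "m = j + k" using \<open>\<not> Suc m < k\<close> by (metis le_add_diff_inverse2 not_less_eq le_neq_implies_less less_Suc_eq_le)
    have "ff q k (Suc m) = ff q k m - dl q k * ff q k j" using ff_rec[of j] j by simp
    then show ?thesis using dl_pos ff_nonneg[of j] by (simp add: mult_nonneg_nonneg)
  qed
qed

lemma ff_antimono: "j \<le> m \<Longrightarrow> ff q k m \<le> ff q k j"
  using ff_Suc_le by (intro decseqD[of "ff q k"]) (auto intro: decseq_SucI)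

lemma ff_le1: "ff q k m \<le> 1"
  using ff_antimono[of 0 m] ff_small[of 0] k1 by simp

lemma dl_le: "dl q k \<le> 1 / real q ^ k"
  unfolding dl_def using q2 by (simp add: field_simps)

lemma dl_lt1: "dl q k < 1"
proof -
  have "1 / real q ^ k < 1" using q2 k1 by (simp add: field_simps one_less_power)
  then show ?thesis using dl_le by simp
qed

lemma ff_upper: "ff q k m \<le> exp (- dl q k * (real m - real k))"
proof (induction m rule: less_induct)
  case (less m)
  show ?case
  proof (cases "m \<le> k")
    case True
    have "0 \<le> dl q k * (real k - real m)" using True dl_pos by simp
    then have "1 \<le> exp (- dl q k * (real m - real k))" by (simp add: algebra_simps)
    then show ?thesis using ff_le1[of m] by linarith
  next
    case False
    then obtain j where j: "m = j + k + 1" by (metis add.commute add_Suc_right le_Suc_ex not_le Suc_eq_plus1 less_eq_Suc_le)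
    have "ff q k m = ff q k (j + k) - dl q k * ff q k j" using ff_rec j by simp
    also have "\<dots> \<le> ff q k (j + k) - dl q k * ff q k (j + k)"
      using ff_antimono[of j "j + k"] dl_pos by (simp add: mult_left_mono)
    also have "\<dots> = (1 - dl q k) * ff q k (j + k)" by algebra
    also have "\<dots> \<le> exp (- dl q k) * exp (- dl q k * (real (j + k) - real k))"
    proof (rule mult_mono)
      show "1 - dl q k \<le> exp (- dl q k)" using exp_ge_add_one_self[of "- dl q k"] by simp
      show "ff q k (j + k) \<le> exp (- dl q k * (real (j + k) - real k))" using less.IH[of "j + k"] j by simp
    qed (use dl_lt1 ff_nonneg in auto)
    also have "\<dots> = exp (- dl q k * (real m - real k))" unfolding j
      by (simp add: algebra_simps flip: exp_add)
    finally show ?thesis .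
  qed
qed

lemma dl_ge: "1 / real q ^ k \<le> 2 * dl q k"
  unfolding dl_def using q2 by (simp add: field_simps)

lemma d4_of: "4 * real k * dl q k \<le> 1 \<Longrightarrow> 4 * dl q k \<le> 1"
proof -
  assume h: "4 * real k * dl q k \<le> 1"
  have "1 * (4 * dl q k) \<le> real k * (4 * dl q k)"
    using k1 dl_pos by (intro mult_right_mono) auto
  then show ?thesis using h by (simp add: algebra_simps)
qed

lemma ff_ratio1:
  assumes h: "4 * real k * dl q k \<le> 1"
  shows "\<forall>j\<le>m. (1 - 2 * dl q k) ^ (m - j) * ff q k j \<le> ff q k m"
proof (induction m)
  case 0 then show ?case by simp
next
  case (Suc m)
  let ?r = "1 - 2 * dl q k"
  have d4: "4 * dl q k \<le> 1" using d4_of[OF h] .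
  have r0: "0 \<le> ?r" using d4 by simp
  have r1: "?r \<le> 1" using dl_pos by simp
  have key: "?r * ff q k m \<le> ff q k (Suc m)"
  proof (cases "Suc m < k")
    case True then show ?thesis using ff_small[of m] ff_small[of "Suc m"] r1 by simp
  next
    case False
    show ?thesis
    proof (cases "Suc m = k")
      case True
      then show ?thesis using ff_k ff_small[of m] dl_ge by simp
    next
      case False
      then obtain j where j: "m = j + k" using \<open>\<not> Suc m < k\<close>
        by (metis le_add_diff_inverse2 not_less_eq le_neq_implies_less less_Suc_eq_le)
      have rk: "1 / 2 \<le> ?r ^ k"
      proof -
        have "1 + real k * (- 2 * dl q k) \<le> (1 + (- 2 * dl q k)) ^ k"
          by (rule Bernoulli_inequality) (use d4 dl_pos in simp)
        then show ?thesis using h by simp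
      qed
      have "?r ^ k * ff q k j \<le> ff q k m" using Suc.IH[rule_format, of j] j by simp
      moreover have "(1/2) * ff q k j \<le> ?r ^ k * ff q k j"
        by (rule mult_right_mono[OF rk ff_nonneg])
      ultimately have fj: "ff q k j \<le> 2 * ff q k m" by linarith
      have "ff q k (Suc m) = ff q k m - dl q k * ff q k j" using ff_rec[of j] j by simp
      also have "\<dots> \<ge> ff q k m - dl q k * (2 * ff q k m)"
        using fj dl_pos by (simp add: mult_left_mono)
      finally show ?thesis by (simp add: algebra_simps)
    qed
  qed
  show ?case
  proof (intro allI impI)
    fix j assume j: "j \<le> Suc m"
    show "?r ^ (Suc m - j) * ff q k j \<le> ff q k (Suc m)"
    proof (cases "j = Suc m")
      case True then show ?thesis by simp
    next
      case False
      then have jm: "j \<le> m" using j by simp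
      then have "?r ^ (Suc m - j) * ff q k j = ?r * (?r ^ (m - j) * ff q k j)"
        by (simp add: Suc_diff_le)
      also have "\<dots> \<le> ?r * ff q k m" using Suc.IH jm r0 by (simp add: mult_left_mono)
      also have "\<dots> \<le> ff q k (Suc m)" by (rule key)
      finally show ?thesis .
    qed
  qed
qed


lemma ff_ratio2:
  assumes h: "4 * real k * dl q k \<le> 1" and m: "k \<le> m"
  shows "(1 - xx q k) * ff q k m \<le> ff q k (Suc m)"
proof -
  let ?r = "1 - 2 * dl q k"
  have d4: "4 * dl q k \<le> 1" using d4_of[OF h] .
  obtain j where j: "m = j + k" using m by (metis le_add_diff_inverse2)
  have rk: "1 - 2 * real k * dl q k \<le> ?r ^ k"
  proof -
    have "1 + real k * (- 2 * dl q k) \<le> (1 + (- 2 * dl q k)) ^ k"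
      by (rule Bernoulli_inequality) (use d4 dl_pos in simp)
    then show ?thesis by simp
  qed
  have pos: "0 < 1 - 2 * real k * dl q k" using h dl_pos k1 by simp
  have "?r ^ k * ff q k j \<le> ff q k m" using ff_ratio1[OF h, of m, rule_format, of j] j by simp
  moreover have "(1 - 2 * real k * dl q k) * ff q k j \<le> ?r ^ k * ff q k j"
    by (rule mult_right_mono[OF rk ff_nonneg])
  ultimately have "(1 - 2 * real k * dl q k) * ff q k j \<le> ff q k m" by linarith
  then have fj: "ff q k j \<le> ff q k m / (1 - 2 * real k * dl q k)"
    using pos by (simp add: field_simps)
  have "ff q k (Suc m) = ff q k m - dl q k * ff q k j" using ff_rec[of j] j by simp
  also have "\<dots> \<ge> ff q k m - dl q k * (ff q k m / (1 - 2 * real k * dl q k))"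
  proof -
    have "dl q k * ff q k j \<le> dl q k * (ff q k m / (1 - 2 * real k * dl q k))"
      using fj dl_pos by (intro mult_left_mono) auto
    then show ?thesis by linarith
  qed
  finally show ?thesis unfolding xx_def by (simp add: algebra_simps)
qed

lemma xx_bounds:
  assumes h: "4 * real k * dl q k \<le> 1"
  shows "0 \<le> xx q k" "xx q k \<le> 2 * dl q k" "xx q k \<le> 1 / 2"
proof -
  have pos: "1 / 2 \<le> 1 - 2 * real k * dl q k" using h by simp
  show "0 \<le> xx q k" unfolding xx_def using pos dl_pos by simp
  have "dl q k / (1 - 2 * real k * dl q k) \<le> dl q k / (1 / 2)"
    using pos dl_pos by (intro divide_left_mono) auto
  then show "xx q k \<le> 2 * dl q k" unfolding xx_def by simp
  have d4: "4 * dl q k \<le> 1" using d4_of[OF h] .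
  then show "xx q k \<le> 1 / 2" using \<open>xx q k \<le> 2 * dl q k\<close> by simp
qed

lemma ff_lower_pow:
  assumes h: "4 * real k * dl q k \<le> 1"
  shows "(1 - 1 / real q ^ k) * (1 - xx q k) ^ m \<le> ff q k m"
proof -
  have x0: "0 \<le> 1 - xx q k" "1 - xx q k \<le> 1" using xx_bounds[OF h] by auto
  have a0: "0 \<le> 1 - 1 / real q ^ k" using q2 by (simp add: field_simps one_le_power)
  show ?thesis
  proof (cases "m < k")
    case True
    have "(1 - 1 / real q ^ k) * (1 - xx q k) ^ m \<le> 1 * 1"
      using x0 a0 by (intro mult_mono) (auto simp: power_le_one)
    then show ?thesis using ff_small[OF True] by simp
  next
    case False
    then obtain t where t: "m = k + t" by (metis le_add_diff_inverse not_less)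
    have "(1 - xx q k) ^ t * ff q k k \<le> ff q k (k + t)"
    proof (induction t)
      case 0 then show ?case by simp
    next
      case (Suc t)
      have "(1 - xx q k) ^ Suc t * ff q k k = (1 - xx q k) * ((1 - xx q k) ^ t * ff q k k)" by simp
      also have "\<dots> \<le> (1 - xx q k) * ff q k (k + t)" using Suc.IH x0 by (simp add: mult_left_mono)
      also have "\<dots> \<le> ff q k (Suc (k + t))" by (rule ff_ratio2[OF h]) simp
      finally show ?case by simp
    qed
    moreover have "(1 - xx q k) ^ m \<le> (1 - xx q k) ^ t" unfolding t using x0
      by (simp add: power_decreasing)
    ultimately show ?thesis unfolding t using ff_k a0 x0
      by (smt (verit, ccfv_SIG) mult_right_mono mult.commute zero_le_power)
  qed
qed

lemma ff_lower:
  assumes h: "4 * real k * dl q k \<le> 1"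
  shows "(1 - 1 / real q ^ k) * exp (- real m * (xx q k + 2 * (xx q k)^2)) \<le> ff q k m"
proof -
  have x: "0 \<le> xx q k" "xx q k \<le> 1/2" using xx_bounds[OF h] by auto
  have a0: "0 \<le> 1 - 1 / real q ^ k" using q2 by (simp add: field_simps one_le_power)
  have "exp (- real m * (xx q k + 2 * (xx q k)^2)) \<le> exp (real m * ln (1 - xx q k))"
  proof -
    have "real m * (- xx q k - 2 * (xx q k)^2) \<le> real m * ln (1 - xx q k)"
      using ln_one_minus_pos_lower_bound[OF x] by (intro mult_left_mono) auto
    then show ?thesis by (simp add: algebra_simps)
  qed
  also have "\<dots> = (1 - xx q k) ^ m" using x by (simp add: exp_of_nat_mult)
  finally show ?thesis using ff_lower_pow[OF h] a0
    by (smt (verit, ccfv_SIG) mult_left_mono)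
qed

end



definition phi :: "nat \<Rightarrow> real \<Rightarrow> real" where
  "phi q u = u * exp (- ((real q - 1) / real q) * u)"

definition TT :: "nat \<Rightarrow> nat \<Rightarrow> nat \<Rightarrow> real" where
  "TT q n k = real (card (C1k n q k)) / ((real q ^ n / real n) * ((real q - 1) / real q)^2)"

definition eta :: "nat \<Rightarrow> nat \<Rightarrow> real" where
  "eta q k = (1 + 2 * xx q k) / (1 - 2 * real k * dl q k) - 1"

definition lam :: "nat \<Rightarrow> nat \<Rightarrow> real" where
  "lam q k = (1 - 1 / real q ^ k) * exp (- (real q ^ 2 * eta q k))"

definition mu :: "nat \<Rightarrow> nat \<Rightarrow> real" where
  "mu q k = exp ((2 * real k + 2) * dl q k)"

definition hh :: "nat \<Rightarrow> real \<Rightarrow> real" where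
  "hh q t = t - log (real q) (exp 1) * (real q - 1) * real q powr (t - 1)"

definition Lc :: "nat \<Rightarrow> nat \<Rightarrow> nat" where
  "Lc q n = nat \<lceil>log (real q) (real n)\<rceil>"

lemma pow_ge: "3 \<le> a \<Longrightarrow> a + 3 \<le> (2::nat) ^ a"
proof (induction a rule: dec_induct)
  case base then show ?case by simp
next
  case (step a) then show ?case by simp
qed

definition RR :: "nat \<Rightarrow> nat \<Rightarrow> real" where
  "RR q n = real (C1 n q) / ((real q ^ n / real n) * ((real q - 1) / real q)^2)"


context
  fixes q :: nat
  assumes q2: "2 \<le> q"
begin

lemma TT_eq:
  assumes k: "1 \<le> k" and n: "n = k + m + 2"
  shows "TT q n k = (real n / real q ^ k) * ff q k m"
proof -
  have qq: "real q ^ n = real q ^ k * real q ^ m * real q ^ 2" unfolding n by (simp add: power_add power2_eq_square)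
  have "real (card (C1k n q k)) = (real q - 1)^2 * real (A q k m)"
    using card_C1k[OF k n, of q] q2 by (simp add: of_nat_diff)
  then show ?thesis unfolding TT_def ff_def qq using q2 n
    by (simp add: field_simps)
qed

lemma dl_n: "dl q k * real n = ((real q - 1) / real q) * (real n / real q ^ k)"
  unfolding dl_def by (simp add: field_simps)

lemma TT_upper:
  assumes k: "1 \<le> k" and n: "k + 2 \<le> n"
  shows "TT q n k \<le> phi q (real n / real q ^ k) * mu q k"
proof -
  define m where "m = n - k - 2"
  have n': "n = k + m + 2" using n unfolding m_def by simp
  have "TT q n k = (real n / real q ^ k) * ff q k m" by (rule TT_eq[OF k n'])
  also have "\<dots> \<le> (real n / real q ^ k) * exp (- dl q k * (real m - real k))"
    using ff_upper[OF q2 k] by (intro mult_left_mono) auto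
  also have "- dl q k * (real m - real k) = - (dl q k * real n) + (2 * real k + 2) * dl q k"
    unfolding n' by (simp add: algebra_simps)
  also have "(real n / real q ^ k) * exp (- (dl q k * real n) + (2 * real k + 2) * dl q k)
      = phi q (real n / real q ^ k) * mu q k"
    unfolding phi_def mu_def dl_n exp_add by (simp add: algebra_simps)
  finally show ?thesis .
qed

lemma TT_lower:
  assumes k: "1 \<le> k" and n: "k + 2 \<le> n" and h: "4 * real k * dl q k \<le> 1"
    and u: "real n / real q ^ k \<le> real q ^ 2"
  shows "phi q (real n / real q ^ k) * lam q k \<le> TT q n k"
proof -
  define m where "m = n - k - 2"
  define u where "u = real n / real q ^ k"
  define b where "b = (real q - 1) / real q"
  define x where "x = xx q k"
  have n': "n = k + m + 2" using n unfolding m_def by simp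
  have xb: "0 \<le> x" "x \<le> 1/2" using xx_bounds[OF q2 k h] unfolding x_def by auto
  have pos: "1/2 \<le> 1 - 2 * real k * dl q k" using h by simp
  have eta0: "0 \<le> eta q k"
  proof -
    have "1 - 2 * real k * dl q k \<le> 1 + 2 * x" proof -
      have "0 \<le> real k * dl q k" using dl_pos[OF q2 k] by simp
      then show ?thesis using xb by linarith
    qed
    then show ?thesis unfolding eta_def x_def using pos by (simp add: field_simps)
  qed
  have b01: "0 \<le> b" "b \<le> 1" unfolding b_def using q2 by auto
  have u0: "0 \<le> u" unfolding u_def by simp
  have key: "real n * (x + 2 * x^2) = b * u * (1 + eta q k)"
  proof -
    have "real n * (x + 2 * x^2) = real n * x * (1 + 2 * x)" by (simp add: power2_eq_square algebra_simps)
    also have "\<dots> = (dl q k * real n) * (1 + 2 * x) / (1 - 2 * real k * dl q k)"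
      by (simp add: x_def xx_def)
    finally have "real n * (x + 2 * x^2) = (dl q k * real n) * (1 + 2 * x) / (1 - 2 * real k * dl q k)" .
    also have "\<dots> = b * u * (1 + eta q k)"
      unfolding dl_n eta_def b_def u_def x_def using pos by (simp add: field_simps)
    finally show ?thesis .
  qed
  have "exp (- b * u) * exp (- (real q ^ 2 * eta q k)) \<le> exp (- real m * (x + 2 * x^2))"
  proof -
    have "b * u * eta q k \<le> 1 * real q ^ 2 * eta q k"
      using b01 u u0 eta0 unfolding u_def[symmetric] by (intro mult_right_mono mult_mono) auto
    moreover have "real m * (x + 2 * x^2) \<le> real n * (x + 2 * x^2)"
      using xb n' by (intro mult_right_mono) auto
    ultimately have "real m * (x + 2 * x^2) \<le> b * u + real q ^ 2 * eta q k"
      using key by (simp add: algebra_simps)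
    then show ?thesis unfolding exp_add[symmetric] by simp
  qed
  then have "(1 - 1 / real q ^ k) * (exp (- b * u) * exp (- (real q ^ 2 * eta q k))) \<le> ff q k m"
    using ff_lower[OF q2 k h, of m] unfolding x_def
    by (smt (verit) mult_left_mono q2 one_le_power divide_le_eq_1 of_nat_le_iff le_trans one_le_numeral of_nat_numeral)
  then have "u * ((1 - 1 / real q ^ k) * (exp (- b * u) * exp (- (real q ^ 2 * eta q k)))) \<le> u * ff q k m"
    using u0 by (intro mult_left_mono) auto
  moreover have "TT q n k = u * ff q k m" unfolding u_def by (rule TT_eq[OF k n'])
  ultimately show ?thesis unfolding phi_def lam_def u_def[symmetric] b_def[symmetric]
    by (simp add: algebra_simps)
qed

lemma TT_last:
  assumes n: "2 \<le> n"
  shows "TT q n (n - 1) \<le> real n * real q ^ 2 / real q ^ n"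
proof -
  have c: "real (card (C1k n q (n - 1))) \<le> real q - 1"
    using card_C1k_last[OF n, of q] q2 by (simp add: of_nat_diff)
  have D: "0 < (real q ^ n / real n) * ((real q - 1) / real q)^2" using q2 n by simp
  have "TT q n (n - 1) \<le> (real q - 1) / ((real q ^ n / real n) * ((real q - 1) / real q)^2)"
    unfolding TT_def using c D by (intro divide_right_mono) auto
  also have "\<dots> = real n * real q ^ 2 / (real q ^ n * (real q - 1))"
  proof -
    define a where "a = real q - 1"
    have a: "0 < a" unfolding a_def using q2 by simp
    show ?thesis unfolding a_def[symmetric] using a q2 n by (simp add: field_simps power2_eq_square)
  qed
  also have "\<dots> \<le> real n * real q ^ 2 / real q ^ n"
    using q2 by (intro divide_left_mono) (auto simp: mult_le_cancel_left1)
  finally show ?thesis .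
qed

lemma bq: "1/2 \<le> (real q - 1) / real q" "(real q - 1) / real q \<le> 1" "0 < (real q - 1) / real q"
  using q2 by (auto simp: field_simps)

lemma phi_up:
  assumes "0 \<le> a" "a \<le> c" "c \<le> real q / (real q - 1)"
  shows "phi q a \<le> phi q c"
proof -
  define b where "b = (real q - 1) / real q"
  have b: "0 < b" unfolding b_def using bq by simp
  have bc: "b * c \<le> 1" using assms(3) q2 unfolding b_def by (simp add: field_simps)
  have "0 \<le> (1 - b * c) * (c - a)" using bc assms by (intro mult_nonneg_nonneg) auto
  moreover have "c * (1 - b * (c - a)) - a = (1 - b * c) * (c - a)" by (simp add: algebra_simps)
  ultimately have "a \<le> c * (1 - b * (c - a))" by linarith
  also have "\<dots> \<le> c * exp (- b * (c - a))"
    using exp_ge_add_one_self[of "- b * (c - a)"] assms by (intro mult_left_mono) auto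
  finally have "a \<le> c * exp (- b * (c - a))" .
  then have "a * exp (- b * a) \<le> c * exp (- b * (c - a)) * exp (- b * a)"
    by (intro mult_right_mono) auto
  also have "\<dots> = c * exp (- b * c)" by (simp add: algebra_simps flip: exp_add)
  finally show ?thesis unfolding phi_def b_def .
qed

lemma phi_down:
  assumes "real q / (real q - 1) \<le> a" "a \<le> c"
  shows "phi q c \<le> phi q a"
proof -
  define b where "b = (real q - 1) / real q"
  have b: "0 < b" unfolding b_def using bq by simp
  have ba: "1 \<le> b * a" using assms(1) q2 unfolding b_def by (simp add: field_simps)
  have "0 < real q / (real q - 1)" using q2 by simp
  then have a0: "0 \<le> a" using assms(1) by linarith
  have "0 \<le> (b * a - 1) * (c - a)" using ba assms by (intro mult_nonneg_nonneg) auto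
  moreover have "a * (1 + b * (c - a)) - c = (b * a - 1) * (c - a)" by (simp add: algebra_simps)
  ultimately have "c \<le> a * (1 + b * (c - a))" by linarith
  also have "\<dots> \<le> a * exp (b * (c - a))"
    using exp_ge_add_one_self[of "b * (c - a)"] a0 by (intro mult_left_mono) auto
  finally have "c \<le> a * exp (b * (c - a))" .
  then have "c * exp (- b * c) \<le> a * exp (b * (c - a)) * exp (- b * c)"
    by (intro mult_right_mono) auto
  also have "\<dots> = a * exp (- b * a)" by (simp add: algebra_simps flip: exp_add)
  finally show ?thesis unfolding phi_def b_def .
qed

lemma phi_max: "phi q u \<le> (real q / (real q - 1)) * exp (- 1)"
proof -
  define b where "b = (real q - 1) / real q"
  have b: "0 < b" unfolding b_def using bq by simp
  have "b * u \<le> exp (b * u - 1)" using exp_ge_add_one_self[of "b * u - 1"] by simp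
  then have "b * u * exp (- b * u) \<le> exp (b * u - 1) * exp (- b * u)" by (intro mult_right_mono) auto
  also have "\<dots> = exp (- 1)" by (simp flip: exp_add)
  finally have "b * phi q u \<le> exp (- 1)" unfolding phi_def b_def by (simp add: algebra_simps)
  then have "phi q u \<le> exp (- 1) / b" using b by (simp add: field_simps)
  then show ?thesis unfolding b_def by (simp add: ac_simps)
qed

lemma phi_at: "phi q (real q / (real q - 1)) = (real q / (real q - 1)) * exp (- 1)"
proof -
  have e: "- ((real q - 1) / real q) * (real q / (real q - 1)) = -1" using q2 by (simp add: field_simps)
  show ?thesis unfolding phi_def e by simp
qed

lemma phi_small: assumes "0 < u" shows "phi q u \<le> 16 / u"
proof -
  define b where "b = (real q - 1) / real q"
  have b: "1/2 \<le> b" "0 < b" unfolding b_def using bq by auto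
  have e: "b * u / 2 \<le> exp (b * u / 2)" using exp_ge_add_one_self[of "b * u / 2"] by linarith
  have bu: "0 < b * u" using b assms by simp
  have "exp (- b * u) = inverse (exp (b * u / 2))^2"
    by (simp add: power2_eq_square flip: exp_add exp_minus)
  also have "\<dots> \<le> inverse (b * u / 2)^2"
    using e bu by (intro power_mono le_imp_inverse_le) auto
  finally have "u * exp (- b * u) \<le> u * inverse (b * u / 2)^2" using assms by (intro mult_left_mono) auto
  also have "\<dots> = 4 / (b * b * u)" using assms b by (simp add: field_simps power2_eq_square)
  also have "\<dots> \<le> 16 / u"
  proof -
    have "(1/2) * (1/2) \<le> b * b" by (rule mult_mono) (use b in auto)
    then have "1/4 \<le> b * b" by simp
    then show ?thesis using assms by (simp add: field_simps)
  qed
  finally show ?thesis unfolding phi_def b_def .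
qed

lemma phi_nonneg: "0 \<le> u \<Longrightarrow> 0 \<le> phi q u" unfolding phi_def by simp

lemma dl_alt: "dl q k = ((real q - 1) / real q) * (1 / real q) ^ k"
  unfolding dl_def by (simp add: field_simps power_one_over)

lemma pow_lim: "(\<lambda>k. (1 / real q) ^ k) \<longlonglongrightarrow> 0"
  by (rule LIMSEQ_realpow_zero) (use q2 in auto)

lemma dl_lim: "(\<lambda>k. dl q k) \<longlonglongrightarrow> 0"
  unfolding dl_alt by (rule tendsto_mult_right_zero[OF pow_lim])

lemma kdl_lim: "(\<lambda>k. real k * dl q k) \<longlonglongrightarrow> 0"
proof -
  have "(\<lambda>k. real k / real q ^ k) \<longlonglongrightarrow> 0"
    using lim_n_over_pown[of "real q"] q2 by simp
  then have "(\<lambda>k. ((real q - 1) / real q) * (real k / real q ^ k)) \<longlonglongrightarrow> 0"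
    by (rule tendsto_mult_right_zero)
  moreover have "\<And>k. ((real q - 1) / real q) * (real k / real q ^ k) = real k * dl q k"
    unfolding dl_alt by (simp add: power_one_over)
  ultimately show ?thesis by simp
qed

lemma qk_lim: "(\<lambda>k. 1 / real q ^ k) \<longlonglongrightarrow> 0"
  using pow_lim by (simp add: power_one_over)

lemma mu_lim: "(\<lambda>k. mu q k) \<longlonglongrightarrow> 1"
proof -
  have "(\<lambda>k. exp (2 * (real k * dl q k) + 2 * dl q k)) \<longlonglongrightarrow> exp (2 * 0 + 2 * 0)"
    by (intro tendsto_intros kdl_lim dl_lim)
  moreover have "\<And>k. exp (2 * (real k * dl q k) + 2 * dl q k) = mu q k"
    unfolding mu_def by (simp add: algebra_simps)
  ultimately show ?thesis by simp
qed

lemma lam_lim: "(\<lambda>k. lam q k) \<longlonglongrightarrow> 1"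
proof -
  have x0: "(\<lambda>k. xx q k) \<longlonglongrightarrow> 0 / (1 - 2 * 0)"
    unfolding xx_def mult.assoc by (intro tendsto_intros dl_lim kdl_lim) simp
  then have x: "(\<lambda>k. xx q k) \<longlonglongrightarrow> 0" by simp
  have "(\<lambda>k. eta q k) \<longlonglongrightarrow> (1 + 2 * 0) / (1 - 2 * 0) - 1"
    unfolding eta_def mult.assoc by (intro tendsto_intros x kdl_lim) simp
  then have e: "(\<lambda>k. eta q k) \<longlonglongrightarrow> 0" by simp
  have "(\<lambda>k. (1 - 1 / real q ^ k) * exp (- (real q ^ 2 * eta q k))) \<longlonglongrightarrow> (1 - 0) * exp (- (real q ^ 2 * 0))"
    by (intro tendsto_intros qk_lim e)
  then show ?thesis unfolding lam_def by simp
qed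

lemma mu_le: "mu q k \<le> exp 2"
proof -
  have "1 + real (k + 1) * (real q - 1) \<le> (1 + (real q - 1)) ^ (k + 1)"
    by (rule Bernoulli_inequality) (use q2 in simp)
  then have "real (k + 1) * (real q - 1) \<le> real q ^ (k + 1)" by simp
  then have "(2 * real k + 2) * dl q k \<le> 2" unfolding dl_def using q2
    by (simp add: field_simps)
  then show ?thesis unfolding mu_def by simp
qed

lemma Fq_eq: "Fq q d = max (hh q (d + 2)) (max (hh q (d + 1)) (hh q d))"
  unfolding Fq_def hh_def by (simp add: algebra_simps)

lemma powr_hh: "real q powr (hh q t) = phi q (real q powr t)"
proof -
  have q0: "0 < real q" "1 < real q" using q2 by auto
  have c: "log (real q) (exp 1) * ln (real q) = 1" unfolding log_def using q0 by simp
  have p1: "real q powr (t - 1) = real q powr t / real q" using q0 by (simp add: powr_diff)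
  have "real q powr (hh q t) = exp (hh q t * ln (real q))" using q0 by (simp add: powr_def)
  also have "hh q t * ln (real q) = t * ln (real q) - (log (real q) (exp 1) * ln (real q)) * (real q - 1) * real q powr (t - 1)"
  proof -
    have gen: "\<And>c a P l. (t - c * a * P) * l = t * l - (c * l) * a * P" by (simp add: algebra_simps)
    show ?thesis unfolding hh_def by (rule gen)
  qed
  also have "\<dots> = t * ln (real q) - ((real q - 1) / real q) * real q powr t"
    unfolding c p1 by simp
  also have "exp \<dots> = real q powr t * exp (- ((real q - 1) / real q) * real q powr t)"
    using q0 by (simp add: exp_diff powr_def divide_inverse exp_minus)
  finally show ?thesis unfolding phi_def .
qed

lemma powr_max: "real q powr (max a b) = max (real q powr a) (real q powr b)"
  using q2 by (auto simp: max_def)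

lemma G_eq: "real q powr Fq q d = max (phi q (real q powr (d + 2))) (max (phi q (real q powr (d + 1))) (phi q (real q powr d)))"
  unfolding Fq_eq powr_max powr_hh ..


lemma Delta_facts:
  assumes n: "1 \<le> n"
  shows "real q powr Delta q n = real n / real q ^ Lc q n"
    "real n \<le> real q ^ Lc q n" "real q ^ Lc q n < real q * real n"
proof -
  have q0: "0 < real q" "1 < real q" using q2 by auto
  have lg: "0 \<le> log (real q) (real n)" using n q0 by simp
  then have L: "real (Lc q n) = of_int \<lceil>log (real q) (real n)\<rceil>" unfolding Lc_def by simp
  have pL: "real q powr real (Lc q n) = real q ^ Lc q n" using q0 by (simp add: powr_realpow)
  have pn: "real q powr log (real q) (real n) = real n" using q0 n by simp
  show "real q powr Delta q n = real n / real q ^ Lc q n"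
    unfolding Delta_def L[symmetric] powr_diff pn pL ..
  have "log (real q) (real n) \<le> real (Lc q n)" unfolding L by simp
  then have "real q powr log (real q) (real n) \<le> real q powr real (Lc q n)" using q0 by simp
  then show "real n \<le> real q ^ Lc q n" using pn pL by simp
  have "real (Lc q n) < log (real q) (real n) + 1" unfolding L by linarith
  then have "real q powr real (Lc q n) < real q powr (log (real q) (real n) + 1)" using q0 by simp
  then show "real q ^ Lc q n < real q * real n" using pn pL q0 by (simp add: powr_add mult.commute)
qed

lemma G_alt:
  assumes n: "1 \<le> n"
  shows "real q powr Fq q (Delta q n) = max (phi q (real q ^ 2 * (real n / real q ^ Lc q n)))
     (max (phi q (real q * (real n / real q ^ Lc q n))) (phi q (real n / real q ^ Lc q n)))"
proof -
  have q0: "0 < real q" using q2 by auto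
  show ?thesis unfolding G_eq powr_add Delta_facts(1)[OF n] using q0
    by (simp add: powr_numeral power2_eq_square mult.commute)
qed

lemma G_low:
  assumes n: "1 \<le> n"
  shows "exp (- real q) \<le> real q powr Fq q (Delta q n)"
proof -
  define w where "w = real n / real q ^ Lc q n"
  have q0: "0 < real q" using q2 by auto
  have w1: "w \<le> 1" unfolding w_def using Delta_facts(2)[OF n] q0 by (subst pos_divide_le_eq) auto
  have qw: "1 < real q * w" unfolding w_def using Delta_facts(3)[OF n] q0 by (simp add: less_divide_eq_1_pos)
  have "((real q - 1) / real q) * (real q * w) \<le> 1 * real q"
    using bq w1 qw q0 by (intro mult_mono) auto
  then have "exp (- real q) \<le> exp (- ((real q - 1) / real q) * (real q * w))" by simp
  then have "1 * exp (- real q) \<le> phi q (real q * w)" unfolding phi_def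
    using qw by (intro mult_mono) auto
  then show ?thesis unfolding G_alt[OF n] w_def by simp
qed

lemma lattice:
  assumes n: "1 \<le> n"
  shows "phi q (real n / real q ^ k) \<le> real q powr Fq q (Delta q n)"
proof -
  define L where "L = Lc q n"
  define w where "w = real n / real q ^ L"
  have q0: "0 < real q" "1 < real q" using q2 by auto
  have w1: "w \<le> 1" unfolding w_def L_def using Delta_facts(2)[OF n] q0 by (subst pos_divide_le_eq) auto
  have qw: "1 < real q * w" unfolding w_def L_def using Delta_facts(3)[OF n] q0 by (simp add: less_divide_eq_1_pos)
  have w0: "0 < w" unfolding w_def using n q0 by simp
  have G: "real q powr Fq q (Delta q n) = max (phi q (real q ^ 2 * w)) (max (phi q (real q * w)) (phi q w))"
    unfolding G_alt[OF n] w_def L_def ..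
  have b1: "1 \<le> real q / (real q - 1)" using q2 by (simp add: field_simps)
  have b2: "real q / (real q - 1) \<le> real q"
    using q2 by (simp add: field_simps)
  consider "L \<le> k" | "k + 1 = L" | "k + 2 \<le> L" by linarith
  then show ?thesis
  proof cases
    case 1
    have "real q ^ L \<le> real q ^ k" using 1 q0 by (simp add: power_increasing)
    then have "real n / real q ^ k \<le> w" unfolding w_def using q0
      by (intro divide_left_mono) auto
    then have "phi q (real n / real q ^ k) \<le> phi q w"
      using w1 b1 by (intro phi_up) auto
    then show ?thesis unfolding G by simp
  next
    case 2
    have "real n / real q ^ k = real q * w" unfolding w_def 2[symmetric] using q0 by simp
    then show ?thesis unfolding G by simp
  next
    case 3
    have e: "real q ^ L = real q ^ k * real q ^ (L - k)" using 3 by (simp flip: power_add)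
    have "real n / real q ^ k = real q ^ (L - k) * w" unfolding w_def e using q0 by simp
    moreover have "real q ^ 2 \<le> real q ^ (L - k)" using 3 q0 by (intro power_increasing) auto
    ultimately have le: "real q ^ 2 * w \<le> real n / real q ^ k" using w0 by (simp add: mult_right_mono)
    have "real q < real q ^ 2 * w" using qw q0 by (simp add: power2_eq_square)
    then have "phi q (real n / real q ^ k) \<le> phi q (real q ^ 2 * w)"
      using b2 le by (intro phi_down) auto
    then show ?thesis unfolding G by simp
  qed
qed

lemma G_pos: "0 < real q powr Fq q d"
proof -
  have "0 < phi q (real q powr d)" unfolding phi_def using q2 by simp
  then show ?thesis unfolding G_eq by simp
qed

lemma G_max: "real q powr Fq q d \<le> (real q / (real q - 1)) * exp (- 1)"
  unfolding G_eq using phi_max by simp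

lemma C1_ge: "1 \<le> k \<Longrightarrow> k < n \<Longrightarrow> card (C1k n q k) \<le> C1 n q"
  unfolding C1_def by (intro Max_ge) auto

lemma C1_attain: "2 \<le> n \<Longrightarrow> \<exists>k0\<in>{1..<n}. C1 n q = card (C1k n q k0)"
proof -
  assume n: "2 \<le> n"
  have "C1 n q \<in> (\<lambda>k. card (C1k n q k)) ` {1..<n}"
    unfolding C1_def using n by (intro Max_in) auto
  then show ?thesis by auto
qed

lemma main_bound:
  assumes e: "0 < e"
  shows "\<exists>N. \<forall>n\<ge>N. (1 - e) * real q powr Fq q (Delta q n) \<le> RR q n \<and> RR q n \<le> (1 + e) * real q powr Fq q (Delta q n)"
proof -
  define c0 where "c0 = exp (- real q)"
  have c0: "0 < c0" unfolding c0_def by simp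
  have q0: "0 < real q" "1 < real q" using q2 by auto
  have "eventually (\<lambda>k. mu q k < 1 + e) sequentially"
    using mu_lim e by (intro order_tendstoD(2)) auto
  moreover have "eventually (\<lambda>k. 1 - e < lam q k) sequentially"
    using lam_lim e by (intro order_tendstoD(1)) auto
  moreover have "eventually (\<lambda>k. real k * dl q k < 1/4) sequentially"
    using kdl_lim by (intro order_tendstoD(2)) auto
  ultimately have "eventually (\<lambda>k. mu q k < 1 + e \<and> 1 - e < lam q k \<and> real k * dl q k < 1/4) sequentially"
    by eventually_elim auto
  then obtain K0 where K0: "\<forall>k\<ge>K0. mu q k < 1 + e \<and> 1 - e < lam q k \<and> real k * dl q k < 1/4"
    unfolding eventually_sequentially by blast
  define K where "K = max K0 2"
  have K2: "2 \<le> K" unfolding K_def by simp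
  have KK: "\<And>k. K \<le> k \<Longrightarrow> mu q k \<le> 1 + e \<and> 1 - e \<le> lam q k \<and> 4 * real k * dl q k \<le> 1"
    using K0 unfolding K_def by fastforce
  have ev3: "eventually (\<lambda>n. real n / real q ^ n < e * c0 / (real q)^2) sequentially"
    using lim_n_over_pown[of "real q"] q0 e c0 by (intro order_tendstoD(2)) auto
  then obtain N3 where N3: "\<forall>n\<ge>N3. real n / real q ^ n < e * c0 / (real q)^2"
    unfolding eventually_sequentially by blast
  obtain N2 :: nat where N2: "16 * exp 2 * real q ^ K / (e * c0) \<le> real N2" using real_arch_simple by blast
  define N where "N = max (max N3 (N2 + 1)) (max 2 (q ^ (K + 1) + 1))"
  show ?thesis
  proof (intro exI[of _ N] allI impI)
    fix n assume nN: "N \<le> n"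
    have n2: "2 \<le> n" and n1: "1 \<le> n" using nN unfolding N_def by auto
    have n3: "real n / real q ^ n < e * c0 / (real q)^2" using N3 nN unfolding N_def by auto
    have nN2: "real N2 < real n" using nN unfolding N_def by auto
    have nK: "q ^ (K + 1) < n" using nN unfolding N_def by auto
    define G where "G = real q powr Fq q (Delta q n)"
    define L where "L = Lc q n"
    define w where "w = real n / real q ^ L"
    have Gc0: "c0 \<le> G" unfolding G_def c0_def using G_low[OF n1] .
    have D: "0 < (real q ^ n / real n) * ((real q - 1) / real q)^2" using q2 n1 by simp
    have TTdef: "\<And>k. TT q n k = real (card (C1k n q k)) / ((real q ^ n / real n) * ((real q - 1) / real q)^2)"
      unfolding TT_def ..
    have RRdef: "RR q n = real (C1 n q) / ((real q ^ n / real n) * ((real q - 1) / real q)^2)"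
      unfolding RR_def ..
    have nL1: "real n \<le> real q ^ L" unfolding L_def by (rule Delta_facts(2)[OF n1])
    have nL2: "real q ^ L < real q * real n" unfolding L_def by (rule Delta_facts(3)[OF n1])
    have LK: "K + 2 \<le> L"
    proof -
      have "real q ^ (K + 1) < real n" using nK by (metis of_nat_less_iff of_nat_power)
      then have "real q ^ (K + 1) < real q ^ L" using nL1 by linarith
      then have "K + 1 < L" by (rule power_less_imp_less_exp[OF q0(2)])
      then show ?thesis by simp
    qed
    have Ln: "L + 2 \<le> n"
    proof -
      have "real q ^ L = real q * real q ^ (L - 1)" using LK by (simp flip: power_Suc)
      then have "real q ^ (L - 1) < real n" using nL2 q0 by simp
      moreover have "real ((L - 1) + 3) \<le> real q ^ (L - 1)"
      proof -
        have "(L - 1) + 3 \<le> 2 ^ (L - 1)" using LK K2 by (intro pow_ge) auto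
        also have "(2::nat) ^ (L - 1) \<le> q ^ (L - 1)" using q2 by (intro power_mono) auto
        finally show ?thesis by (metis of_nat_le_iff of_nat_power)
      qed
      moreover have "(L - 1) + 3 = L + 2" using LK by simp
      ultimately have "real (L + 2) < real n" by (metis order.strict_trans1)
      then show ?thesis by (simp only: of_nat_less_iff)
    qed
    have upper: "RR q n \<le> (1 + e) * G"
    proof -
      obtain k0 where k0: "k0 \<in> {1..<n}" "C1 n q = card (C1k n q k0)" using C1_attain[OF n2] by blast
      have R: "RR q n = TT q n k0" unfolding RRdef TTdef k0(2) ..
      have eG: "e * c0 \<le> (1 + e) * G"
      proof -
        have "e * c0 \<le> e * G" using Gc0 e by (intro mult_left_mono) auto
        also have "\<dots> \<le> (1 + e) * G" using Gc0 c0 by (intro mult_right_mono) auto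
        finally show ?thesis .
      qed
      consider "k0 = n - 1" | "k0 + 2 \<le> n" "k0 < K" | "k0 + 2 \<le> n" "K \<le> k0" using k0(1) by fastforce
      then show ?thesis
      proof cases
        case 1
        have "TT q n k0 \<le> real n * (real q)^2 / real q ^ n" unfolding 1 by (rule TT_last[OF n2])
        also have "\<dots> = (real q)^2 * (real n / real q ^ n)" by simp
        also have "\<dots> \<le> (real q)^2 * (e * c0 / (real q)^2)" using n3 q0 by (intro mult_left_mono) auto
        also have "\<dots> = e * c0" using q0 by simp
        finally show ?thesis using R eG by simp
      next
        case 2
        define u where "u = real n / real q ^ k0"
        have u0: "0 < u" unfolding u_def using n1 q0 by simp
        have "TT q n k0 \<le> phi q u * mu q k0" unfolding u_def using TT_upper[of k0 n] k0 2 by simp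
        also have "\<dots> \<le> (16 / u) * exp 2" using phi_small[OF u0] mu_le[of k0] phi_nonneg[of u] u0
          by (intro mult_mono) (auto simp: mu_def)
        also have "\<dots> = 16 * exp 2 * real q ^ k0 / real n" unfolding u_def using n1 q0 by simp
        also have "\<dots> \<le> 16 * exp 2 * real q ^ K / real n"
          using 2 q0 n1 by (intro divide_right_mono mult_left_mono power_increasing) auto
        also have "\<dots> \<le> e * c0"
        proof -
          have "16 * exp 2 * real q ^ K \<le> e * c0 * real N2" using N2 e c0 by (simp add: field_simps)
          also have "\<dots> \<le> e * c0 * real n" using nN2 e c0 by (intro mult_left_mono) auto
          finally show ?thesis using n1 by (simp add: field_simps)
        qed
        finally show ?thesis using R eG by simp
      next
        case 3
        define u where "u = real n / real q ^ k0"
        have "TT q n k0 \<le> phi q u * mu q k0" unfolding u_def using TT_upper[of k0 n] k0 3 by simp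
        also have "\<dots> \<le> G * (1 + e)" unfolding G_def u_def
          using lattice[OF n1, of k0] KK[OF 3(2)] phi_nonneg[of "real n / real q ^ k0"]
          by (intro mult_mono) (auto simp: mu_def)
        finally show ?thesis using R by (simp add: mult.commute)
      qed
    qed
    have lower: "(1 - e) * G \<le> RR q n"
    proof -
      have w1: "w \<le> 1" unfolding w_def using nL1 q0 by (subst pos_divide_le_eq) auto
      have w0: "0 \<le> w" unfolding w_def by simp
      have Galt: "G = max (phi q (real q ^ 2 * w)) (max (phi q (real q * w)) (phi q w))"
        unfolding G_def w_def L_def G_alt[OF n1] ..
      have "\<exists>j\<le>2. G = phi q (real q ^ j * w)"
        unfolding Galt by (cases "phi q (real q ^ 2 * w) \<le> max (phi q (real q * w)) (phi q w)";
            cases "phi q (real q * w) \<le> phi q w") (auto simp: max_def intro: exI[of _ 0] exI[of _ 1] exI[of _ 2])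
      then obtain j where j: "j \<le> 2" "G = phi q (real q ^ j * w)" by blast
      define k where "k = L - j"
      have kK: "K \<le> k" unfolding k_def using LK j by simp
      have k1: "1 \<le> k" using kK K2 by simp
      have kn: "k + 2 \<le> n" unfolding k_def using Ln by simp
      have u: "real n / real q ^ k = real q ^ j * w"
      proof -
        have "real q ^ L = real q ^ k * real q ^ j" unfolding k_def using LK j by (simp flip: power_add)
        then show ?thesis unfolding w_def using q0 by (simp add: field_simps)
      qed
      have uq: "real n / real q ^ k \<le> real q ^ 2"
      proof -
        have "real q ^ j * w \<le> real q ^ 2 * 1" using w1 w0 j q0 by (intro mult_mono power_increasing) auto
        then show ?thesis using u by simp
      qed
      have hk: "4 * real k * dl q k \<le> 1" using KK[OF kK] by simp
      have "phi q (real n / real q ^ k) * lam q k \<le> TT q n k" by (rule TT_lower[OF k1 kn hk uq])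
      moreover have "TT q n k \<le> RR q n" unfolding TTdef RRdef
        using C1_ge[OF k1, of n] kn D by (intro divide_right_mono) auto
      moreover have "(1 - e) * G \<le> phi q (real n / real q ^ k) * lam q k"
        unfolding u j(2)[symmetric] using KK[OF kK] G_pos[of "Delta q n"] unfolding G_def
        by (subst mult.commute) (intro mult_left_mono, auto)
      ultimately show ?thesis by linarith
    qed
    show "(1 - e) * real q powr Fq q (Delta q n) \<le> RR q n \<and> RR q n \<le> (1 + e) * real q powr Fq q (Delta q n)"
      using upper lower unfolding G_def by simp
  qed
qed

end


theorem theorem2:
  fixes q :: nat
  assumes "q \<ge> 2"
  shows "((\<lambda>n. real (C1 n q) /
            ((real q ^ n / real n) * ((real q - 1) / real q)^2 * real q powr Fq q (Delta q n)))
           \<longlonglongrightarrow> 1)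
    \<and> (\<forall>d. -1 < d \<and> d \<le> 0 \<longrightarrow>
           ((real q - 1) / real q)^2 * real q powr Fq q d \<le> (real q - 1) / (exp 1 * real q))
    \<and> (\<forall>s::nat \<Rightarrow> nat. strict_mono s \<and>
           (\<lambda>i. Delta q (s i)) \<longlonglongrightarrow> - log (real q) (real q - 1) \<longrightarrow>
           (\<lambda>i. real (C1 (s i) q) * real (s i) / real q ^ (s i))
             \<longlonglongrightarrow> (real q - 1) / (exp 1 * real q))"
proof -
  note q2 = assms
  have q0: "0 < real q" "1 < real q" using q2 by auto
  define b where "b = (real q - 1) / real q"
  have b0: "0 < b" unfolding b_def using q0 by simp
  define X where "X n = real (C1 n q) / ((real q ^ n / real n) * b^2 * real q powr Fq q (Delta q n))" for n
  have XR: "X n = RR q n / real q powr Fq q (Delta q n)" for n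
    unfolding X_def RR_def b_def by simp
  have P1: "X \<longlonglongrightarrow> 1"
    unfolding LIMSEQ_iff
  proof (intro allI impI)
    fix r :: real assume r: "0 < r"
    obtain N where N: "\<forall>n\<ge>N. (1 - r/2) * real q powr Fq q (Delta q n) \<le> RR q n \<and> RR q n \<le> (1 + r/2) * real q powr Fq q (Delta q n)"
      using main_bound[OF q2, of "r/2"] r by auto
    show "\<exists>no. \<forall>n\<ge>no. norm (X n - 1) < r"
    proof (intro exI[of _ N] allI impI)
      fix n assume "N \<le> n"
      then have h: "(1 - r/2) * real q powr Fq q (Delta q n) \<le> RR q n" "RR q n \<le> (1 + r/2) * real q powr Fq q (Delta q n)"
        using N by auto
      have G: "0 < real q powr Fq q (Delta q n)" by (rule G_pos[OF q2])
      have "1 - r/2 \<le> X n" "X n \<le> 1 + r/2" unfolding XR using h G by (simp_all add: field_simps)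
      then show "norm (X n - 1) < r" using r by simp
    qed
  qed
  have gm: "b^2 * real q powr Fq q d \<le> (real q - 1) / (exp 1 * real q)" for d
  proof -
    have "b^2 * real q powr Fq q d \<le> b^2 * ((real q / (real q - 1)) * exp (- 1))"
      using G_max[OF q2, of d] by (intro mult_left_mono) auto
    also have "\<dots> = (real q - 1) / (exp 1 * real q)" unfolding b_def using q0
      by (simp add: field_simps power2_eq_square exp_minus)
    finally show ?thesis .
  qed
  have P3: "(\<lambda>i. real (C1 (s i) q) * real (s i) / real q ^ (s i)) \<longlonglongrightarrow> (real q - 1) / (exp 1 * real q)"
    if s: "strict_mono s" and ds: "(\<lambda>i. Delta q (s i)) \<longlonglongrightarrow> - log (real q) (real q - 1)" for s
  proof -
    define d0 where "d0 = - log (real q) (real q - 1)"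
    have p1: "real q powr (d0 + 1) = real q / (real q - 1)"
    proof -
      have qm: "0 < real q - 1" "real q \<noteq> 1" using q2 by auto
      have "real q powr d0 = inverse (real q - 1)" unfolding d0_def powr_minus using q0 qm by simp
      then show ?thesis unfolding powr_add using q0 by (simp add: field_simps)
    qed
    have Gd0: "real q powr Fq q d0 = (real q / (real q - 1)) * exp (- 1)"
    proof (rule antisym)
      show "real q powr Fq q d0 \<le> (real q / (real q - 1)) * exp (- 1)" by (rule G_max[OF q2])
      have "phi q (real q powr (d0 + 1)) \<le> real q powr Fq q d0" unfolding G_eq[OF q2] by simp
      then show "(real q / (real q - 1)) * exp (- 1) \<le> real q powr Fq q d0"
        unfolding p1 phi_at[OF q2] .
    qed
    have Gs: "(\<lambda>i. real q powr Fq q (Delta q (s i))) \<longlonglongrightarrow> real q powr Fq q d0"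
      unfolding G_eq[OF q2] phi_def using ds unfolding d0_def[symmetric]
      by (intro tendsto_intros) (use q0 in auto)
    have Xs: "(\<lambda>i. X (s i)) \<longlonglongrightarrow> 1" using LIMSEQ_subseq_LIMSEQ[OF P1 s] by (simp add: o_def)
    have "(\<lambda>i. X (s i) * real q powr Fq q (Delta q (s i)) * b^2) \<longlonglongrightarrow> 1 * real q powr Fq q d0 * b^2"
      by (intro tendsto_intros Xs Gs)
    moreover have "1 * real q powr Fq q d0 * b^2 = (real q - 1) / (exp 1 * real q)"
      unfolding Gd0 b_def using q0 by (simp add: field_simps power2_eq_square exp_minus)
    moreover have "X n * real q powr Fq q (Delta q n) * b^2 = real (C1 n q) * real n / real q ^ n" for n
    proof (cases "n = 0")
      case True then show ?thesis unfolding X_def by simp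
    next
      case False
      have G: "0 < real q powr Fq q (Delta q n)" by (rule G_pos[OF q2])
      show ?thesis unfolding X_def using G b0 False q0 by (simp add: field_simps)
    qed
    ultimately show ?thesis by simp
  qed
  show ?thesis
  proof (intro conjI allI impI)
    show "(\<lambda>n. real (C1 n q) / ((real q ^ n / real n) * ((real q - 1) / real q)^2 * real q powr Fq q (Delta q n))) \<longlonglongrightarrow> 1"
      using P1 unfolding X_def b_def .
  next
    fix d :: real
    show "((real q - 1) / real q)^2 * real q powr Fq q d \<le> (real q - 1) / (exp 1 * real q)"
      using gm unfolding b_def .
  next
    fix s :: "nat \<Rightarrow> nat"
    assume "strict_mono s \<and> (\<lambda>i. Delta q (s i)) \<longlonglongrightarrow> - log (real q) (real q - 1)"
    then show "(\<lambda>i. real (C1 (s i) q) * real (s i) / real q ^ (s i)) \<longlonglongrightarrow> (real q - 1) / (exp 1 * real q)"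
      using P3 by blast
  qed
qed


end
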